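(* Let $G=(V,E)$ be a finite simple graph, $C\subseteq V$ such that no vertex of $V\setminus C$ is isolated, and $m\ge 2$ an integer. Let $P_1$ be the convex hull of the integer feasible solutions of the integer program $F_1$ described below. Let $i\in\{2,\dots,m\}$, $k\in\{1,\dots,i\}$, $U\subseteq V$ nonempty with $|U|=p$, $N\subseteq N^p\langle U\rangle$ (possibly empty), and $W=\{w_1,\dots,w_t\}$ a nonempty set of $t$ vertices such that (H1) $W\subseteq N^p\langle U\rangle\setminus N$; (H2) $N\langle w_{r+1}\rangle\subseteq N\langle w_r\rangle$ for all $r=1,\dots,t-1$; (H3) $N\langle v\rangle\subseteq N\langle w_t\rangle$ for all $v\in N$. Let $j_1,\dots,j_{t+1}\in\{1,\dots,i\}$ be integers with $j_1=1$, $j_{t+1}=i$ and $j_r\le j_{r+1}$ for $r=1,\dots,t$. Then the inequality $$\sum_{u\in U}x_{ui}+\sum_{v\in N}y_{vi}+\sum_{r=1}^t\sum_{j=j_r}^{j_{r+1}}y_{w_rj}+\sum_{v\in N^p\langle U\rangle}(p-1)y_{vk}+\sum_{q=1}^{p-1}\sum_{v\in N^q\langle U\rangle}q\,y_{vk}\le p$$ is valid for $P_1$.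
   Context: $N\langle v\rangle = N[v]$ (closed neighborhood) if $v\in C$ and $N\langle v\rangle=N(v)$ (open neighborhood) if $v\notin C$. For nonempty $U\subseteq V$ and integer $r\ge 0$, $N^r\langle U\rangle=\{v\in V: |N\langle v\rangle\cap U|=r\}$. The integer program $F_1$ has binary variables $x_{vi},y_{vi}$ for $v\in V$, $i=1,\dots,m$, constants $x_{u0}=1$ for $u\in V$, objective $\max\sum_{i=1}^m\sum_{v\in V}y_{vi}$ and constraints: $\sum_{v\in V}y_{vi}\le 1$ ($i=1,\dots,m$); $\sum_{i=1}^m y_{vi}\le 1$ ($v\in V$); $x_{ui}\le x_{u(i-1)}$ ($u\in V$, $i=2,\dots,m$); $x_{ui}+\sum_{v\in N\langle u\rangle}y_{vi}\le 1$ ($u\in V$, $i=1,\dots,m$); $y_{vi}\le\sum_{u\in N\langle v\rangle}(x_{u(i-1)}-x_{ui})$ ($v\in V$, $i=2,\dots,m$); $x_{vi},y_{vi}\in\{0,1\}$. *)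

theory Defs
  imports Main "HOL-Analysis.Analysis"
begin

definition simple_graph :: "'a set \<Rightarrow> ('a \<Rightarrow> 'a \<Rightarrow> bool) \<Rightarrow> bool" where
  "simple_graph V E \<longleftrightarrow> finite V \<and> (\<forall>u v. E u v \<longrightarrow> u \<in> V \<and> v \<in> V)
     \<and> (\<forall>u v. E u v \<longrightarrow> E v u) \<and> (\<forall>v. \<not> E v v)"

definition nbh :: "('a \<Rightarrow> 'a \<Rightarrow> bool) \<Rightarrow> 'a set \<Rightarrow> 'a \<Rightarrow> 'a set" where
  "nbh E C v = (if v \<in> C then insert v {u. E v u} else {u. E v u})"

definition nbhr :: "'a set \<Rightarrow> ('a \<Rightarrow> 'a \<Rightarrow> bool) \<Rightarrow> 'a set \<Rightarrow> nat \<Rightarrow> 'a set \<Rightarrow> 'a set" where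
  "nbhr V E C r U = {v \<in> V. card (nbh E C v \<inter> U) = r}"

type_synonym 'a pt = "('a \<Rightarrow> nat \<Rightarrow> real) \<times> ('a \<Rightarrow> nat \<Rightarrow> real)"

text \<open>A point is a pair (x,y) of functions
  vertex \<Rightarrow> index \<Rightarrow> real; the variables are x v i, y v i for v in V and 1 \<le> i \<le> m.
  The constants x u 0 = 1 are stored in the point; all entries outside the variable
  range (and y v 0) are fixed to 0, so they carry no information.\<close>
definition F1_int :: "'a set \<Rightarrow> ('a \<Rightarrow> 'a \<Rightarrow> bool) \<Rightarrow> 'a set \<Rightarrow> nat \<Rightarrow> 'a pt set" where
  "F1_int V E C m = {(x, y).
     (\<forall>u\<in>V. x u 0 = 1) \<and>
     (\<forall>u i. (u \<notin> V \<or> i > m) \<longrightarrow> x u i = 0) \<and>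
     (\<forall>u i. (u \<notin> V \<or> i > m \<or> i = 0) \<longrightarrow> y u i = 0) \<and>
     (\<forall>v\<in>V. \<forall>i\<in>{1..m}. x v i \<in> {0, 1} \<and> y v i \<in> {0, 1}) \<and>
     (\<forall>i\<in>{1..m}. (\<Sum>v\<in>V. y v i) \<le> 1) \<and>
     (\<forall>v\<in>V. (\<Sum>i=1..m. y v i) \<le> 1) \<and>
     (\<forall>u\<in>V. \<forall>i\<in>{2..m}. x u i \<le> x u (i - 1)) \<and>
     (\<forall>u\<in>V. \<forall>i\<in>{1..m}. x u i + (\<Sum>v\<in>nbh E C u. y v i) \<le> 1) \<and>
     (\<forall>v\<in>V. \<forall>i\<in>{2..m}. y v i \<le> (\<Sum>u\<in>nbh E C v. x u (i - 1) - x u i))}"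

definition conv_pts :: "'a pt set \<Rightarrow> 'a pt set" where
  "conv_pts S = {(x, y). \<exists>n::nat. \<exists>c s.
     (\<forall>k<n. c k \<ge> (0::real) \<and> s k \<in> S) \<and> (\<Sum>k<n. c k) = 1 \<and>
     (\<forall>v i. x v i = (\<Sum>k<n. c k * fst (s k) v i)) \<and>
     (\<forall>v i. y v i = (\<Sum>k<n. c k * snd (s k) v i))}"

definition P1 :: "'a set \<Rightarrow> ('a \<Rightarrow> 'a \<Rightarrow> bool) \<Rightarrow> 'a set \<Rightarrow> nat \<Rightarrow> 'a pt set" where
  "P1 V E C m = conv_pts (F1_int V E C m)"

end

theory Submission
  imports Defs
begin
lemma sum_le_one_aux:
  fixes f :: "'b \<Rightarrow> real"
  assumes "finite A" "\<forall>a\<in>A. 0 \<le> f a \<and> f a \<le> 1"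
    "\<forall>a\<in>A. \<forall>b\<in>A. f a > 0 \<longrightarrow> f b > 0 \<longrightarrow> a = b"
  shows "sum f A \<le> 1"
proof (cases "\<exists>a\<in>A. f a > 0")
  case True
  then obtain a where a: "a \<in> A" "f a > 0" by blast
  have "sum f (A - {a}) = 0"
  proof (rule sum.neutral, rule ballI)
    fix b assume b: "b \<in> A - {a}"
    then have "\<not> f b > 0" using assms(3) a by blast
    moreover have "0 \<le> f b" using assms(2) b by blast
    ultimately show "f b = 0" by linarith
  qed
  then show ?thesis using sum.remove[OF assms(1) a(1), of f] assms(2) a(1) by simp
next
  case False
  then have "\<forall>a\<in>A. f a = 0" using assms(2) by (metis not_less order_antisym)
  then show ?thesis by simp
qed

lemma sum_single_aux:
  fixes yy :: "'b \<Rightarrow> real"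
  assumes "finite S" "\<forall>v\<in>S. v \<noteq> z \<longrightarrow> yy v = 0"
  shows "(\<Sum>v\<in>S. g v * yy v) = (if z \<in> S then g z * yy z else 0)"
proof (cases "z \<in> S")
  case True
  have "(\<Sum>v\<in>S - {z}. g v * yy v) = 0" using assms(2) by (intro sum.neutral) auto
  then show ?thesis using sum.remove[OF assms(1) True, of "\<lambda>v. g v * yy v"] True by simp
next
  case False
  then show ?thesis using assms(2) by (simp, intro sum.neutral) auto
qed

lemma lin_aux1:
  fixes c :: "nat \<Rightarrow> real"
  shows "(\<Sum>a\<in>A. (\<Sum>k<n. c k * f k a)) = (\<Sum>k<n. c k * (\<Sum>a\<in>A. f k a))"
  by (subst sum.swap) (simp add: sum_distrib_left)

lemma lin_aux2:
  fixes c :: "nat \<Rightarrow> real"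
  shows "(\<Sum>a\<in>A. g a * (\<Sum>k<n. c k * f k a)) = (\<Sum>k<n. c k * (\<Sum>a\<in>A. g a * f k a))"
  unfolding sum_distrib_left by (subst sum.swap) (simp add: mult.left_commute)

lemma int_bound:
  fixes V C U N :: "'a set" and E :: "'a \<Rightarrow> 'a \<Rightarrow> bool"
    and m i k p t :: nat and w :: "nat \<Rightarrow> 'a" and j :: "nat \<Rightarrow> nat"
  assumes G: "simple_graph V E"
    and CV: "C \<subseteq> V"
    and m2: "m \<ge> 2"
    and i: "i \<in> {2..m}"
    and k: "k \<in> {1..i}"
    and U: "U \<subseteq> V" "U \<noteq> {}" "card U = p"
    and N: "N \<subseteq> nbhr V E C p U"
    and t: "t \<ge> 1" "inj_on w {1..t}"
    and H1: "w ` {1..t} \<subseteq> nbhr V E C p U - N"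
    and H2: "\<forall>r\<in>{1..t-1}. nbh E C (w (r + 1)) \<subseteq> nbh E C (w r)"
    and H3: "\<forall>v\<in>N. nbh E C v \<subseteq> nbh E C (w t)"
    and j: "\<forall>r\<in>{1..t+1}. j r \<in> {1..i}" "j 1 = 1" "j (t + 1) = i"
           "\<forall>r\<in>{1..t}. j r \<le> j (r + 1)"
    and F: "(x, y) \<in> F1_int V E C m"
  shows "(\<Sum>u\<in>U. x u i) + (\<Sum>v\<in>N. y v i)
    + (\<Sum>r=1..t. \<Sum>jj=j r..j (r + 1). y (w r) jj)
    + (\<Sum>v\<in>nbhr V E C p U. (real p - 1) * y v k)
    + (\<Sum>q=1..p-1. \<Sum>v\<in>nbhr V E C q U. real q * y v k) \<le> real p"
proof -
  have finV: "finite V" and Ein: "\<And>u v. E u v \<Longrightarrow> u \<in> V \<and> v \<in> V"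
    and Esym: "\<And>u v. E u v \<Longrightarrow> E v u"
    using G unfolding simple_graph_def by blast+
  have nbh_sub: "\<And>v. v \<in> V \<Longrightarrow> nbh E C v \<subseteq> V"
    using Ein unfolding nbh_def by auto
  have nbh_fin: "\<And>v. v \<in> V \<Longrightarrow> finite (nbh E C v)"
    using nbh_sub finV finite_subset by blast
  have nbh_sym: "\<And>u v. u \<in> nbh E C v \<Longrightarrow> v \<in> nbh E C u"
    unfolding nbh_def using Esym by (auto split: if_splits)
  have x0: "\<forall>u\<in>V. x u 0 = 1"
    and xout: "\<forall>u i. (u \<notin> V \<or> i > m) \<longrightarrow> x u i = 0"
    and yout: "\<forall>u i. (u \<notin> V \<or> i > m \<or> i = 0) \<longrightarrow> y u i = 0"
    and bin: "\<forall>v\<in>V. \<forall>i\<in>{1..m}. x v i \<in> {0, 1} \<and> y v i \<in> {0, 1}"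
    and ystep: "\<forall>i\<in>{1..m}. (\<Sum>v\<in>V. y v i) \<le> 1"
    and yvert: "\<forall>v\<in>V. (\<Sum>i=1..m. y v i) \<le> 1"
    and xmono: "\<forall>u\<in>V. \<forall>i\<in>{2..m}. x u i \<le> x u (i - 1)"
    and dom: "\<forall>u\<in>V. \<forall>i\<in>{1..m}. x u i + (\<Sum>v\<in>nbh E C u. y v i) \<le> 1"
    and grundy: "\<forall>v\<in>V. \<forall>i\<in>{2..m}. y v i \<le> (\<Sum>u\<in>nbh E C v. x u (i - 1) - x u i)"
    using F unfolding F1_int_def by auto
  have ynn: "\<And>v a. 0 \<le> y v a"
  proof -
    fix v a
    show "0 \<le> y v a"
    proof (cases "v \<in> V \<and> a \<in> {1..m}")
      case True then have "y v a \<in> {0,1}" using bin by blast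
      then show ?thesis by auto
    next
      case False then show ?thesis using yout by force
    qed
  qed
  have xnn: "\<And>v a. 0 \<le> x v a \<and> x v a \<le> 1"
  proof -
    fix v a
    show "0 \<le> x v a \<and> x v a \<le> 1"
    proof (cases "v \<in> V \<and> a \<in> {1..m}")
      case True then have "x v a \<in> {0,1}" using bin by blast
      then show ?thesis by auto
    next
      case False
      then have "v \<notin> V \<or> a > m \<or> (v \<in> V \<and> a = 0)" by auto
      show ?thesis
      proof (cases "v \<in> V \<and> a = 0")
        case True then show ?thesis using x0 by auto
      next
        case False
        then have "v \<notin> V \<or> a > m" using \<open>v \<notin> V \<or> a > m \<or> (v \<in> V \<and> a = 0)\<close> by blast
        then have "x v a = 0" using xout by blast
        then show ?thesis by simp
      qed
    qed
  qed
  have ypos: "\<And>v a. y v a > 0 \<Longrightarrow> v \<in> V \<and> a \<in> {1..m} \<and> y v a = 1"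
  proof -
    fix v a assume "y v a > 0"
    then have "v \<in> V \<and> a \<in> {1..m}" using yout by (metis atLeastAtMost_iff less_irrefl not_le less_one)
    moreover then have "y v a \<in> {0,1}" using bin by blast
    ultimately show "v \<in> V \<and> a \<in> {1..m} \<and> y v a = 1" using \<open>y v a > 0\<close> by auto
  qed
  have uniq: "\<And>v v' a. y v a = 1 \<Longrightarrow> y v' a = 1 \<Longrightarrow> v = v'"
  proof (rule ccontr)
    fix v v' a assume h: "y v a = 1" "y v' a = 1" "v \<noteq> v'"
    then have hv: "v \<in> V" "v' \<in> V" "a \<in> {1..m}" using ypos[of v a] ypos[of v' a] by auto
    have "(\<Sum>z\<in>{v, v'}. y z a) \<le> (\<Sum>z\<in>V. y z a)"
      by (rule sum_mono2) (use finV hv ynn in auto)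
    moreover have "(\<Sum>z\<in>{v, v'}. y z a) = 2" using h by simp
    moreover have "(\<Sum>z\<in>V. y z a) \<le> 1" using ystep hv by blast
    ultimately show False by linarith
  qed
  have xmono': "\<And>u a b. u \<in> V \<Longrightarrow> a \<le> b \<Longrightarrow> b \<le> m \<Longrightarrow> x u b \<le> x u a"
  proof -
    fix u a b assume h: "u \<in> V" "a \<le> b" "b \<le> m"
    have "\<forall>d. a + d \<le> m \<longrightarrow> x u (a + d) \<le> x u a"
    proof
      fix d show "a + d \<le> m \<longrightarrow> x u (a + d) \<le> x u a"
      proof (induction d)
        case 0 then show ?case by simp
      next
        case (Suc d)
        show ?case
        proof
          assume "a + Suc d \<le> m"
          have "x u (a + Suc d) \<le> x u (a + d)"
          proof (cases "a + Suc d \<ge> 2")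
            case True
            then have "a + Suc d \<in> {2..m}" using \<open>a + Suc d \<le> m\<close> by simp
            then have "x u (a + Suc d) \<le> x u (a + Suc d - 1)"
              using xmono h by blast
            then show ?thesis by simp
          next
            case False
            then have "a + d = 0" by simp
            then show ?thesis using xnn[of u "a + Suc d"] x0 h by simp
          qed
          then show "x u (a + Suc d) \<le> x u a" using Suc \<open>a + Suc d \<le> m\<close> by simp
        qed
      qed
    qed
    then show "x u b \<le> x u a" using h by (metis le_add_diff_inverse)
  qed
  have kill: "\<And>v u a b. y v a = 1 \<Longrightarrow> u \<in> nbh E C v \<Longrightarrow> a \<le> b \<Longrightarrow> b \<le> m \<Longrightarrow> x u b = 0"
  proof -
    fix v u a b assume h: "y v a = 1" "u \<in> nbh E C v" "a \<le> b" "b \<le> m"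
    have hv: "v \<in> V" "a \<in> {1..m}" using ypos[of v a] h by auto
    have uV: "u \<in> V" using nbh_sub hv h by blast
    have vu: "v \<in> nbh E C u" using nbh_sym h by blast
    have "y v a \<le> (\<Sum>z\<in>nbh E C u. y z a)"
      by (rule member_le_sum) (use vu ynn nbh_fin uV in auto)
    moreover have "x u a + (\<Sum>z\<in>nbh E C u. y z a) \<le> 1" using dom uV hv by blast
    ultimately have "x u a \<le> 0" using h(1) by linarith
    then show "x u b = 0" using xmono'[OF uV h(3,4)] xnn[of u b] by linarith
  qed
  have dead: "\<And>v b. b \<in> {2..m} \<Longrightarrow> v \<in> V \<Longrightarrow> \<forall>u\<in>nbh E C v. x u (b - 1) = 0 \<Longrightarrow> y v b = 0"
  proof -
    fix v b assume h: "b \<in> {2..m}" "v \<in> V" "\<forall>u\<in>nbh E C v. x u (b - 1) = 0"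
    have "(\<Sum>u\<in>nbh E C v. x u (b - 1) - x u b) \<le> (\<Sum>u\<in>nbh E C v. 0)"
    proof (rule sum_mono)
      fix u assume "u \<in> nbh E C v"
      then have "x u (b - 1) = 0" using h by blast
      then show "x u (b - 1) - x u b \<le> 0" using xnn[of u b] by linarith
    qed
    moreover have "y v b \<le> (\<Sum>u\<in>nbh E C v. x u (b - 1) - x u b)" using grundy h by blast
    ultimately have "y v b \<le> 0" by simp
    then show "y v b = 0" using ynn[of v b] by linarith
  qed
  have finU: "finite U" using U finV finite_subset by blast
  have p1: "p \<ge> 1" using U finU by (metis card_0_eq less_one not_le)
  have nbhrV: "\<And>q. nbhr V E C q U \<subseteq> V" unfolding nbhr_def by blast
  have nbhr_fin: "\<And>q. finite (nbhr V E C q U)" using nbhrV finV finite_subset by blast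
  have nbhr_iff: "\<And>z q. z \<in> V \<Longrightarrow> z \<in> nbhr V E C q U \<longleftrightarrow> card (nbh E C z \<inter> U) = q"
    unfolding nbhr_def by blast
  have jmono: "\<And>r s. 1 \<le> r \<Longrightarrow> r \<le> s \<Longrightarrow> s \<le> t + 1 \<Longrightarrow> j r \<le> j s"
  proof -
    fix r s assume h: "1 \<le> r" "r \<le> s" "s \<le> t + 1"
    from h(2) h(3) show "j r \<le> j s"
    proof (induction s rule: dec_induct)
      case base then show ?case by simp
    next
      case (step n)
      then have "n \<in> {1..t}" using h(1) by simp
      then have "j n \<le> j (n + 1)" using j(4) by blast
      then show ?case using step by simp
    qed
  qed
  have nchain: "\<And>r s. 1 \<le> r \<Longrightarrow> r \<le> s \<Longrightarrow> s \<le> t \<Longrightarrow> nbh E C (w s) \<subseteq> nbh E C (w r)"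
  proof -
    fix r s assume h: "1 \<le> r" "r \<le> s" "s \<le> t"
    from h(2) h(3) show "nbh E C (w s) \<subseteq> nbh E C (w r)"
    proof (induction s rule: dec_induct)
      case base then show ?case by simp
    next
      case (step n)
      then have "n \<in> {1..t-1}" using h(1) by simp
      then have "nbh E C (w (n + 1)) \<subseteq> nbh E C (w n)" using H2 by blast
      then show ?case using step by simp
    qed
  qed
  have Uin: "\<And>z. z \<in> nbhr V E C p U \<Longrightarrow> U \<subseteq> nbh E C z"
  proof -
    fix z assume "z \<in> nbhr V E C p U"
    then have "card (nbh E C z \<inter> U) = card U" using U unfolding nbhr_def by simp
    then have "nbh E C z \<inter> U = U" using card_subset_eq[OF finU, of "nbh E C z \<inter> U"] by blast
    then show "U \<subseteq> nbh E C z" by blast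
  qed
  have wprop: "\<And>r. r \<in> {1..t} \<Longrightarrow> w r \<in> nbhr V E C p U \<and> w r \<notin> N \<and> w r \<in> V"
    using H1 nbhrV by blast
  have NV: "N \<subseteq> V" using N nbhrV by blast
  have killU: "\<And>z a. z \<in> nbhr V E C p U \<Longrightarrow> y z a = 1 \<Longrightarrow> a \<le> i \<Longrightarrow> \<forall>u\<in>U. x u i = 0"
  proof
    fix z a u assume h: "z \<in> nbhr V E C p U" "y z a = 1" "a \<le> i" "u \<in> U"
    then have "u \<in> nbh E C z" using Uin by blast
    then show "x u i = 0" using kill[OF h(2) _ h(3)] i by simp
  qed
  define f where "f r = (\<Sum>jj=j r..j (r + 1). y (w r) jj)" for r
  have frange: "\<And>r. r \<in> {1..t} \<Longrightarrow> 1 \<le> j r \<and> j (r + 1) \<le> i"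
  proof -
    fix r assume "r \<in> {1..t}"
    then have "r \<in> {1..t+1}" "r + 1 \<in> {1..t+1}" by auto
    then show "1 \<le> j r \<and> j (r + 1) \<le> i" using j(1) by auto
  qed
  have f01: "\<And>r. r \<in> {1..t} \<Longrightarrow> 0 \<le> f r \<and> f r \<le> 1"
  proof -
    fix r assume r: "r \<in> {1..t}"
    have "f r \<le> (\<Sum>jj=1..m. y (w r) jj)"
      unfolding f_def by (rule sum_mono2) (use frange[OF r] i ynn in auto)
    also have "\<dots> \<le> 1" using yvert wprop[OF r(1)] by blast
    finally show "0 \<le> f r \<and> f r \<le> 1" unfolding f_def using ynn by (simp add: sum_nonneg)
  qed
  have fpos: "\<And>r. r \<in> {1..t} \<Longrightarrow> f r > 0 \<Longrightarrow> \<exists>a. j r \<le> a \<and> a \<le> j (r + 1) \<and> y (w r) a = 1"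
  proof -
    fix r assume r: "r \<in> {1..t}" "f r > 0"
    have "\<exists>a\<in>{j r..j (r + 1)}. y (w r) a > 0"
    proof (rule ccontr)
      assume "\<not> ?thesis"
      then have "f r \<le> 0" unfolding f_def by (intro sum_nonpos) (metis not_less)
      then show False using r by simp
    qed
    then show "\<exists>a. j r \<le> a \<and> a \<le> j (r + 1) \<and> y (w r) a = 1" using ypos by auto
  qed
  have cross: "\<And>r s a b. r \<in> {1..t} \<Longrightarrow> s \<in> {1..t} \<Longrightarrow> r < s \<Longrightarrow> y (w r) a = 1 \<Longrightarrow> a \<le> j (r + 1)
     \<Longrightarrow> y (w s) b = 1 \<Longrightarrow> j s \<le> b \<Longrightarrow> False"
  proof -
    fix r s a b assume h: "r \<in> {1..t}" "s \<in> {1..t}" "r < s" "y (w r) a = 1" "a \<le> j (r + 1)"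
      "y (w s) b = 1" "j s \<le> b"
    have "j (r + 1) \<le> j s" using jmono[of "r + 1" s] h by simp
    then have ab: "a \<le> b" using h by simp
    have ha: "a \<in> {1..m}" and hb: "b \<in> {1..m}" "w s \<in> V"
      using ypos[of "w r" a] ypos[of "w s" b] h by auto
    show False
    proof (cases "a = b")
      case True
      then have "w r = w s" using uniq h by metis
      then show False using t(2) h unfolding inj_on_def by (metis less_irrefl)
    next
      case False
      then have b2: "b \<in> {2..m}" using ab ha hb by auto
      have "\<forall>u\<in>nbh E C (w s). x u (b - 1) = 0"
      proof
        fix u assume "u \<in> nbh E C (w s)"
        then have "u \<in> nbh E C (w r)" using nchain[of r s] h by auto
        then show "x u (b - 1) = 0" using kill[OF h(4)] False ab hb by simp
      qed
      then have "y (w s) b = 0" using dead[OF b2 hb(2)] by blast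
      then show False using h by simp
    qed
  qed
  have funiq: "\<forall>r\<in>{1..t}. \<forall>s\<in>{1..t}. f r > 0 \<longrightarrow> f s > 0 \<longrightarrow> r = s"
  proof (intro ballI impI)
    fix r s assume h: "r \<in> {1..t}" "s \<in> {1..t}" "f r > 0" "f s > 0"
    obtain a where a: "j r \<le> a" "a \<le> j (r + 1)" "y (w r) a = 1" using fpos h by blast
    obtain b where b: "j s \<le> b" "b \<le> j (s + 1)" "y (w s) b = 1" using fpos h by blast
    show "r = s"
    proof (rule ccontr)
      assume "r \<noteq> s"
      then have "r < s \<or> s < r" by auto
      then show False using cross[OF h(1,2) _ a(3,2) b(3,1)] cross[OF h(2,1) _ b(3,2) a(3,1)] by blast
    qed
  qed
  define B where "B = (\<Sum>v\<in>N. y v i)"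
  define Cw where "Cw = (\<Sum>r=1..t. f r)"
  have Cw_eq: "(\<Sum>r=1..t. \<Sum>jj=j r..j (r + 1). y (w r) jj) = Cw" unfolding Cw_def f_def by simp
  have Cw1: "Cw \<le> 1" unfolding Cw_def by (rule sum_le_one_aux) (use f01 funiq in auto)
  have Cw0: "Cw \<ge> 0" unfolding Cw_def using f01 by (intro sum_nonneg) blast
  have iin: "i \<in> {1..m}" using i by simp
  have B1: "B \<le> 1"
  proof -
    have "B \<le> (\<Sum>v\<in>V. y v i)" unfolding B_def by (rule sum_mono2) (use finV NV ynn in auto)
    also have "\<dots> \<le> 1" using ystep iin by blast
    finally show ?thesis .
  qed
  have B0: "B \<ge> 0" unfolding B_def using ynn by (simp add: sum_nonneg)
  have Bpos: "B > 0 \<Longrightarrow> \<exists>v\<in>N. y v i = 1"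
  proof -
    assume "B > 0"
    have "\<exists>v\<in>N. y v i > 0"
    proof (rule ccontr)
      assume "\<not> ?thesis"
      then have "B \<le> 0" unfolding B_def by (intro sum_nonpos) (metis not_less)
      then show False using \<open>B > 0\<close> by simp
    qed
    then show ?thesis using ypos by auto
  qed
  have Cwpos: "Cw > 0 \<Longrightarrow> \<exists>r\<in>{1..t}. f r > 0"
  proof -
    assume "Cw > 0"
    show ?thesis
    proof (rule ccontr)
      assume "\<not> ?thesis"
      then have "Cw \<le> 0" unfolding Cw_def by (intro sum_nonpos) (metis not_less)
      then show False using \<open>Cw > 0\<close> by simp
    qed
  qed
  have notboth: "B > 0 \<Longrightarrow> Cw > 0 \<Longrightarrow> False"
  proof -
    assume "B > 0" "Cw > 0"
    obtain v where v: "v \<in> N" "y v i = 1" using Bpos \<open>B > 0\<close> by blast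
    obtain r where r: "r \<in> {1..t}" "f r > 0" using Cwpos \<open>Cw > 0\<close> by blast
    obtain a where a: "j r \<le> a" "a \<le> j (r + 1)" "y (w r) a = 1" using fpos r by blast
    have ai: "a \<le> i" using a frange[OF r(1)] by simp
    show False
    proof (cases "a = i")
      case True
      then have "v = w r" using uniq v a by metis
      then show False using wprop[OF r(1)] v by blast
    next
      case False
      have ha: "a \<ge> 1" using ypos[of "w r" a] a by simp
      then have i2: "i \<in> {2..m}" using i by simp
      have "\<forall>u\<in>nbh E C v. x u (i - 1) = 0"
      proof
        fix u assume "u \<in> nbh E C v"
        then have "u \<in> nbh E C (w t)" using H3 v by blast
        then have "u \<in> nbh E C (w r)" using nchain[of r t] r by auto
        moreover have "a \<le> i - 1" "i - 1 \<le> m" using False ai i by auto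
        ultimately show "x u (i - 1) = 0" using kill[OF a(3)] by blast
      qed
      then have "y v i = 0" using dead[OF i2] NV v by blast
      then show False using v by simp
    qed
  qed
  have S1: "B + Cw \<le> 1" using B1 Cw1 B0 Cw0 notboth by (cases "B > 0"; cases "Cw > 0") auto
  have A0: "B + Cw > 0 \<Longrightarrow> (\<Sum>u\<in>U. x u i) = 0"
  proof -
    assume "B + Cw > 0"
    then have "B > 0 \<or> Cw > 0" using B0 Cw0 by linarith
    then have "\<forall>u\<in>U. x u i = 0"
    proof
      assume "B > 0"
      then obtain v where v: "v \<in> N" "y v i = 1" using Bpos by blast
      then show ?thesis using killU[of v i] N by blast
    next
      assume "Cw > 0"
      then obtain r where r: "r \<in> {1..t}" "f r > 0" using Cwpos by blast
      obtain a where a: "j r \<le> a" "a \<le> j (r + 1)" "y (w r) a = 1" using fpos r by blast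
      have ai: "a \<le> i" using a frange[OF r(1)] by simp
      then show ?thesis using killU[OF _ a(3) ai] wprop[OF r(1)] by blast
    qed
    then show ?thesis by simp
  qed
  define A where "A = (\<Sum>u\<in>U. x u i)"
  define D where "D = (\<Sum>v\<in>nbhr V E C p U. (real p - 1) * y v k)"
  define Q where "Q = (\<Sum>q=1..p-1. \<Sum>v\<in>nbhr V E C q U. real q * y v k)"
  have kin: "k \<in> {1..m}" using k i by auto
  have DQ: "A + D + Q \<le> real p \<and> D + Q \<le> real p - 1"
  proof (cases "\<exists>z\<in>V. y z k = 1")
    case True
    then obtain z where z: "z \<in> V" "y z k = 1" by blast
    have others: "\<forall>v\<in>V. v \<noteq> z \<longrightarrow> y v k = 0"
    proof (intro ballI impI)
      fix v assume "v \<in> V" "v \<noteq> z"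
      then have "y v k \<in> {0, 1}" using bin kin by blast
      then show "y v k = 0" using uniq[of v k z] z \<open>v \<noteq> z\<close> by auto
    qed
    define c where "c = card (nbh E C z \<inter> U)"
    have cp: "c \<le> p" unfolding c_def using U finU by (metis card_mono inf_le2)
    have oth: "\<And>q. \<forall>v\<in>nbhr V E C q U. v \<noteq> z \<longrightarrow> y v k = 0" using others nbhrV by blast
    have "D = (if z \<in> nbhr V E C p U then (real p - 1) * y z k else 0)"
      unfolding D_def by (rule sum_single_aux[OF nbhr_fin oth])
    then have Deq: "D = (if c = p then real p - 1 else 0)"
      using nbhr_iff[OF z(1)] z(2) c_def by simp
    have "Q = (\<Sum>q=1..p-1. if c = q then real q else 0)"
      unfolding Q_def
    proof (rule sum.cong[OF refl])
      fix q
      have "(\<Sum>v\<in>nbhr V E C q U. real q * y v k) = (if z \<in> nbhr V E C q U then real q * y z k else 0)"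
        by (rule sum_single_aux[OF nbhr_fin oth])
      then show "(\<Sum>v\<in>nbhr V E C q U. real q * y v k) = (if c = q then real q else 0)"
        using nbhr_iff[OF z(1)] z(2) c_def by simp
    qed
    also have "\<dots> = (if c \<in> {1..p-1} then real c else 0)"
      by (simp add: sum.delta)
    finally have Qeq: "Q = (if c \<in> {1..p-1} then real c else 0)" .
    have DQc: "D + Q \<le> real c" "D + Q \<le> real p - 1"
      using Deq Qeq cp p1 by auto
    define K where "K = U \<inter> nbh E C z"
    have KU: "K \<subseteq> U" unfolding K_def by blast
    have cK: "card K = c" unfolding K_def c_def by (simp add: Int_commute)
    have "A = (\<Sum>u\<in>U - K. x u i) + (\<Sum>u\<in>K. x u i)"
      unfolding A_def using sum.subset_diff[OF KU finU] by blast
    moreover have "(\<Sum>u\<in>K. x u i) = 0"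
    proof (rule sum.neutral, rule ballI)
      fix u assume "u \<in> K"
      then show "x u i = 0" using kill[OF z(2)] k i unfolding K_def by auto
    qed
    moreover have "(\<Sum>u\<in>U - K. x u i) \<le> (\<Sum>u\<in>U - K. 1)"
      by (rule sum_mono) (use xnn in auto)
    moreover have "card (U - K) = p - c" using card_Diff_subset[OF finite_subset[OF KU finU] KU] U cK by simp
    ultimately have "A \<le> real p - real c" using cp by simp
    then show ?thesis using DQc by linarith
  next
    case False
    have yk0: "\<forall>v\<in>V. y v k = 0"
    proof
      fix v assume "v \<in> V"
      then have "y v k \<in> {0, 1}" using bin kin by blast
      then show "y v k = 0" using False \<open>v \<in> V\<close> by auto
    qed
    have "D = 0" unfolding D_def using yk0 nbhrV by (intro sum.neutral) auto
    moreover have "Q = 0" unfolding Q_def using yk0 nbhrV by (intro sum.neutral ballI) auto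
    moreover have "A \<le> (\<Sum>u\<in>U. 1)" unfolding A_def by (rule sum_mono) (use xnn in auto)
    ultimately show ?thesis using U p1 by simp
  qed
  have "A + B + Cw + D + Q \<le> real p"
  proof (cases "B + Cw > 0")
    case True
    then have "A = 0" using A0 A_def by simp
    then show ?thesis using DQ S1 by linarith
  next
    case False
    then show ?thesis using DQ B0 Cw0 by linarith
  qed
  then show ?thesis unfolding A_def B_def D_def Q_def Cw_eq .
qed

theorem theorem2:
  fixes V C U N :: "'a set" and E :: "'a \<Rightarrow> 'a \<Rightarrow> bool"
    and m i k p t :: nat and w :: "nat \<Rightarrow> 'a" and j :: "nat \<Rightarrow> nat"
  assumes G: "simple_graph V E"
    and CV: "C \<subseteq> V"
    and noiso: "\<forall>v\<in>V - C. \<exists>u. E v u"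
    and m2: "m \<ge> 2"
    and i: "i \<in> {2..m}"
    and k: "k \<in> {1..i}"
    and U: "U \<subseteq> V" "U \<noteq> {}" "card U = p"
    and N: "N \<subseteq> nbhr V E C p U"
    and t: "t \<ge> 1" "inj_on w {1..t}"
    and H1: "w ` {1..t} \<subseteq> nbhr V E C p U - N"
    and H2: "\<forall>r\<in>{1..t-1}. nbh E C (w (r + 1)) \<subseteq> nbh E C (w r)"
    and H3: "\<forall>v\<in>N. nbh E C v \<subseteq> nbh E C (w t)"
    and j: "\<forall>r\<in>{1..t+1}. j r \<in> {1..i}" "j 1 = 1" "j (t + 1) = i"
           "\<forall>r\<in>{1..t}. j r \<le> j (r + 1)"
  shows "\<forall>(x, y)\<in>P1 V E C m.
    (\<Sum>u\<in>U. x u i) + (\<Sum>v\<in>N. y v i)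
    + (\<Sum>r=1..t. \<Sum>jj=j r..j (r + 1). y (w r) jj)
    + (\<Sum>v\<in>nbhr V E C p U. (real p - 1) * y v k)
    + (\<Sum>q=1..p-1. \<Sum>v\<in>nbhr V E C q U. real q * y v k) \<le> real p"
proof (rule ballI)
  fix xy assume xyP: "xy \<in> P1 V E C m"
  obtain x y where xy: "xy = (x, y)" by fastforce
  obtain n :: nat and c s where cs: "\<forall>kk<n. c kk \<ge> (0::real) \<and> s kk \<in> F1_int V E C m" "(\<Sum>kk<n. c kk) = 1"
    "\<forall>v i. x v i = (\<Sum>kk<n. c kk * fst (s kk) v i)"
    "\<forall>v i. y v i = (\<Sum>kk<n. c kk * snd (s kk) v i)"
  proof -
    have "(x, y) \<in> conv_pts (F1_int V E C m)" using xyP unfolding xy P1_def .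
    then have "\<exists>n::nat. \<exists>c s. (\<forall>kk<n. c kk \<ge> (0::real) \<and> s kk \<in> F1_int V E C m) \<and> (\<Sum>kk<n. c kk) = 1 \<and>
      (\<forall>v i. x v i = (\<Sum>kk<n. c kk * fst (s kk) v i)) \<and>
      (\<forall>v i. y v i = (\<Sum>kk<n. c kk * snd (s kk) v i))"
      unfolding conv_pts_def by (simp only: mem_Collect_eq case_prod_conv)
    then show ?thesis using that by blast
  qed
  define L where "L = (\<lambda>(x::'a \<Rightarrow> nat \<Rightarrow> real) (y::'a \<Rightarrow> nat \<Rightarrow> real).
    (\<Sum>u\<in>U. x u i) + (\<Sum>v\<in>N. y v i)
    + (\<Sum>r=1..t. \<Sum>jj=j r..j (r + 1). y (w r) jj)
    + (\<Sum>v\<in>nbhr V E C p U. (real p - 1) * y v k)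
    + (\<Sum>q=1..p-1. \<Sum>v\<in>nbhr V E C q U. real q * y v k))"
  have bound: "\<And>kk. kk < n \<Longrightarrow> L (fst (s kk)) (snd (s kk)) \<le> real p"
  proof -
    fix kk assume "kk < n"
    then have "(fst (s kk), snd (s kk)) \<in> F1_int V E C m" using cs(1) by simp
    then show "L (fst (s kk)) (snd (s kk)) \<le> real p"
      unfolding L_def using int_bound[OF G CV m2 i k U N t H1 H2 H3 j] by simp
  qed
  have xeq: "x = (\<lambda>v i. \<Sum>kk<n. c kk * fst (s kk) v i)" using cs(3) by (intro ext) simp
  have yeq: "y = (\<lambda>v i. \<Sum>kk<n. c kk * snd (s kk) v i)" using cs(4) by (intro ext) simp
  have "L x y = (\<Sum>kk<n. c kk * L (fst (s kk)) (snd (s kk)))"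
    unfolding L_def xeq yeq by (simp add: lin_aux1 lin_aux2 sum.distrib distrib_left)
  also have "\<dots> \<le> (\<Sum>kk<n. c kk * real p)"
    by (rule sum_mono) (use cs(1) bound in \<open>simp add: mult_left_mono\<close>)
  also have "\<dots> = real p" using cs(2) by (simp add: sum_distrib_right[symmetric])
  finally show "case xy of (x, y) \<Rightarrow>
    (\<Sum>u\<in>U. x u i) + (\<Sum>v\<in>N. y v i)
    + (\<Sum>r=1..t. \<Sum>jj=j r..j (r + 1). y (w r) jj)
    + (\<Sum>v\<in>nbhr V E C p U. (real p - 1) * y v k)
    + (\<Sum>q=1..p-1. \<Sum>v\<in>nbhr V E C q U. real q * y v k) \<le> real p"
    unfolding xy L_def by simp
qed

end
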